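(* Let $X$ be a finite abelian group. The quotient of $C(S_X^+)$ by the ideal generated by the relations $u_{ij}=u_{kl}$ for all $i,j,k,l\in X$ with $i-j=k-l$ is equal to $C(X)$; more precisely, this quotient is commutative, equal to $C(Y)$ for a subgroup $Y\subset S_X$ with $u_{ij}(\sigma)=\delta_{i\sigma(j)}$, and $Y$ is the group of translations $j\mapsto j+x$, $x\in X$, of $X$.
   Context: $C(S_X^+)$ is the universal $C^*$-algebra generated by the entries of a magic matrix $u=(u_{ij})_{i,j\in X}$ (entries are orthogonal projections, each row and column summing to $1$), with Hopf structure $\Delta(u_{ij})=\sum_ku_{ik}\otimes u_{kj}$, $\varepsilon(u_{ij})=\delta_{ij}$, $S(u_{ij})=u_{ji}$. Its commutative quotients of the form $C(Y)$, $Y\subset S_X$ a subgroup of the permutation group of $X$, correspond to $u_{ij}(\sigma)=\delta_{i\sigma(j)}$. *)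

theory Defs
  imports "HOL-Combinatorics.Permutations" Complex_Main
begin

definition cstar_algebra ::
  "(complex \<Rightarrow> 'a::ring_1 \<Rightarrow> 'a) \<Rightarrow> ('a \<Rightarrow> 'a) \<Rightarrow> ('a \<Rightarrow> real) \<Rightarrow> bool" where
  "cstar_algebra scal star nrm \<longleftrightarrow>
     \<comment> \<open>complex vector space / algebra structure\<close>
     (\<forall>x. scal 1 x = x) \<and>
     (\<forall>a b x. scal (a * b) x = scal a (scal b x)) \<and>
     (\<forall>a b x. scal (a + b) x = scal a x + scal b x) \<and>
     (\<forall>a x y. scal a (x + y) = scal a x + scal a y) \<and>
     (\<forall>a x y. scal a (x * y) = scal a x * y) \<and>
     (\<forall>a x y. scal a (x * y) = x * scal a y) \<and>
     \<comment> \<open>involution\<close>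
     (\<forall>x. star (star x) = x) \<and>
     (\<forall>x y. star (x + y) = star x + star y) \<and>
     (\<forall>x y. star (x * y) = star y * star x) \<and>
     (\<forall>a x. star (scal a x) = scal (cnj a) (star x)) \<and>
     \<comment> \<open>norm\<close>
     (\<forall>x. nrm x = 0 \<longleftrightarrow> x = 0) \<and>
     (\<forall>x y. nrm (x + y) \<le> nrm x + nrm y) \<and>
     (\<forall>a x. nrm (scal a x) = cmod a * nrm x) \<and>
     (\<forall>x y. nrm (x * y) \<le> nrm x * nrm y) \<and>
     \<comment> \<open>completeness\<close>
     (\<forall>f :: nat \<Rightarrow> 'a.
        (\<forall>e>0. \<exists>N. \<forall>m\<ge>N. \<forall>n\<ge>N. nrm (f m - f n) < e) \<longrightarrow>
        (\<exists>L. \<forall>e>0. \<exists>N. \<forall>n\<ge>N. nrm (f n - L) < e)) \<and>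
     \<comment> \<open>C*-identity\<close>
     (\<forall>x. nrm (star x * x) = nrm x ^ 2)"

definition magic :: "('a::ring_1 \<Rightarrow> 'a) \<Rightarrow> ('x::finite \<Rightarrow> 'x \<Rightarrow> 'a) \<Rightarrow> bool" where
  "magic star u \<longleftrightarrow>
     (\<forall>i j. star (u i j) = u i j \<and> u i j * u i j = u i j) \<and>
     (\<forall>i. (\<Sum>j\<in>UNIV. u i j) = 1) \<and>
     (\<forall>j. (\<Sum>i\<in>UNIV. u i j) = 1)"

definition diff_rel :: "('x::ab_group_add \<Rightarrow> 'x \<Rightarrow> 'a) \<Rightarrow> bool" where
  "diff_rel u \<longleftrightarrow> (\<forall>i j k l. i - j = k - l \<longrightarrow> u i j = u k l)"

text \<open>The permutation matrix (evaluation of u at sigma): u_ij(sigma) = delta_{i, sigma j}.\<close>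

definition perm_mat :: "('x \<Rightarrow> 'x) \<Rightarrow> 'x \<Rightarrow> 'x \<Rightarrow> complex" where
  "perm_mat \<sigma> i j = (if i = \<sigma> j then 1 else 0)"

end

theory Submission
  imports Defs
begin


lemma pow_comm:
  fixes a b :: "'a::ring_1"
  assumes "a * b = b * a"
  shows "a ^ i * b ^ j = b ^ j * a ^ i"
proof -
  have "a ^ i * b = b * a ^ i" by (rule power_commuting_commutes[OF assms])
  then have "b * a ^ i = a ^ i * b" by simp
  then have "b ^ j * a ^ i = a ^ i * b ^ j" by (rule power_commuting_commutes)
  then show ?thesis by simp
qed

lemma comm_binomial:
  fixes a b :: "'a::ring_1"
  assumes ab: "a * b = b * a"
  shows "(a + b) ^ n = (\<Sum>k\<le>n. of_nat (n choose k) * a ^ k * b ^ (n - k))"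
proof (induction n)
  case 0
  then show ?case by simp
next
  case (Suc n)
  have ba: "b * a ^ k = a ^ k * b" for k
    using pow_comm[OF ab, of k 1] by simp
  have "(\<Sum>k\<le>Suc n. of_nat (Suc n choose k) * a ^ k * b ^ (Suc n - k))
      = b ^ Suc n + (\<Sum>j\<le>n. of_nat (Suc n choose Suc j) * a ^ Suc j * b ^ (n - j))"
    unfolding sum.atMost_Suc_shift by (simp del: binomial_Suc_Suc sum.atMost_Suc)
  also have "\<dots> = b ^ Suc n + (\<Sum>j\<le>n. of_nat (n choose Suc j) * a ^ Suc j * b ^ (n - j))
      + (\<Sum>j\<le>n. of_nat (n choose j) * a ^ Suc j * b ^ (n - j))"
    by (simp add: distrib_right sum.distrib)
  also have "b ^ Suc n + (\<Sum>j\<le>n. of_nat (n choose Suc j) * a ^ Suc j * b ^ (n - j))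
      = (\<Sum>k\<le>Suc n. of_nat (n choose k) * a ^ k * b ^ (Suc n - k))"
    unfolding sum.atMost_Suc_shift by (simp del: binomial_Suc_Suc sum.atMost_Suc)
  also have "\<dots> = (\<Sum>k\<le>n. of_nat (n choose k) * a ^ k * b ^ (Suc n - k))"
    by (simp add: binomial_eq_0)
  also have "\<dots> = b * (\<Sum>k\<le>n. of_nat (n choose k) * a ^ k * b ^ (n - k))"
    unfolding sum_distrib_left
  proof (rule sum.cong[OF refl])
    fix k assume "k \<in> {..n}"
    then have "Suc n - k = Suc (n - k)" by auto
    then show "of_nat (n choose k) * a ^ k * b ^ (Suc n - k) = b * (of_nat (n choose k) * a ^ k * b ^ (n - k))"
    proof -
      have "b * (of_nat (n choose k) * a ^ k * b ^ (n - k)) = of_nat (n choose k) * (b * a ^ k) * b ^ (n - k)"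
        by (metis mult.assoc mult_of_nat_commute)
      also have "\<dots> = of_nat (n choose k) * a ^ k * (b * b ^ (n - k))"
        by (simp add: ba mult.assoc)
      finally show ?thesis using \<open>Suc n - k = Suc (n - k)\<close> by simp
    qed
  qed
  also have "(\<Sum>j\<le>n. of_nat (n choose j) * a ^ Suc j * b ^ (n - j))
      = a * (\<Sum>k\<le>n. of_nat (n choose k) * a ^ k * b ^ (n - k))"
    unfolding sum_distrib_left
    by (rule sum.cong[OF refl]) (metis mult.assoc mult_of_nat_commute power_Suc)
  finally show ?case using Suc.IH by (simp add: distrib_right)
qed

lemma comm_moment:
  fixes a b :: "'a::ring_1"
  assumes ab: "a * b = b * a"
  shows "(\<Sum>k\<le>Suc n. of_nat (k * (Suc n choose k)) * a ^ k * b ^ (Suc n - k))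
     = of_nat (Suc n) * a * (a + b) ^ n"
proof -
  have "(\<Sum>k\<le>Suc n. of_nat (k * (Suc n choose k)) * a ^ k * b ^ (Suc n - k))
      = (\<Sum>j\<le>n. of_nat (Suc j * (Suc n choose Suc j)) * a ^ Suc j * b ^ (n - j))"
    unfolding sum.atMost_Suc_shift by (simp del: binomial_Suc_Suc sum.atMost_Suc of_nat_mult mult_Suc)
  also have "\<dots> = (\<Sum>j\<le>n. of_nat (Suc n) * a * (of_nat (n choose j) * a ^ j * b ^ (n - j)))"
  proof (rule sum.cong[OF refl])
    fix j
    have e: "of_nat (Suc j * (Suc n choose Suc j)) = (of_nat (Suc n) * of_nat (n choose j) :: 'a)"
      by (simp only: Suc_times_binomial of_nat_mult)
    have f: "of_nat (n choose j) * a = a * (of_nat (n choose j) :: 'a)" by (rule mult_of_nat_commute)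
    show "of_nat (Suc j * (Suc n choose Suc j)) * a ^ Suc j * b ^ (n - j)
      = of_nat (Suc n) * a * (of_nat (n choose j) * a ^ j * b ^ (n - j))"
      unfolding e by (simp only: mult.assoc power_Suc) (metis mult.assoc f)
  qed
  also have "\<dots> = of_nat (Suc n) * a * (a + b) ^ n"
    by (simp add: comm_binomial[OF ab] sum_distrib_left)
  finally show ?thesis .
qed



lemma quad_sum: "(\<Sum>k\<le>n. k * k * (n choose k)) * 4 = n * (n + 1) * 2 ^ n"
proof (cases n)
  case 0 then show ?thesis by simp
next
  case (Suc m)
  have "(\<Sum>k\<le>Suc m. k * k * (Suc m choose k)) = (\<Sum>j\<le>m. Suc j * (Suc j * (Suc m choose Suc j)))"
    unfolding sum.atMost_Suc_shift by (simp del: binomial_Suc_Suc sum.atMost_Suc mult_Suc mult_Suc_right add: mult.assoc)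
  also have "\<dots> = (\<Sum>j\<le>m. Suc m * (j * (m choose j)) + Suc m * (m choose j))"
    by (rule sum.cong[OF refl]) (simp only: Suc_times_binomial, simp add: algebra_simps)
  also have "\<dots> = Suc m * (m * 2 ^ (m - 1)) + Suc m * 2 ^ m"
    by (simp add: sum.distrib sum_distrib_left[symmetric] choose_linear_sum choose_row_sum)
  finally have e: "(\<Sum>k\<le>Suc m. k * k * (Suc m choose k)) = Suc m * (m * 2 ^ (m - 1)) + Suc m * 2 ^ m" .
  have "m * 2 ^ (m - 1) * 4 = 2 * m * 2 ^ m"
    by (cases m) auto
  have "(Suc m * (m * 2 ^ (m - 1)) + Suc m * 2 ^ m) * 4 = Suc m * (m * 2 ^ (m - 1) * 4) + Suc m * 2 ^ m * 4"
    by (simp add: algebra_simps)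
  also have "\<dots> = Suc m * (2 * m * 2 ^ m) + Suc m * 2 ^ m * 4" using \<open>m * 2 ^ (m - 1) * 4 = 2 * m * 2 ^ m\<close> by (simp only:)
  also have "\<dots> = Suc m * (Suc m + 1) * 2 ^ Suc m" by (simp add: algebra_simps)
  finally show ?thesis unfolding Suc e .
qed

lemma var_sum: "(\<Sum>k\<le>n. (2 * real k - real n)^2 * real (n choose k)) = real n * 2 ^ n"
proof -
  have q: "(\<Sum>k\<le>n. real k * real k * real (n choose k)) * 4 = real n * (real n + 1) * 2 ^ n"
    using arg_cong[OF quad_sum[of n], of real] by (simp add: algebra_simps)
  have l: "(\<Sum>k\<le>n. real k * real (n choose k)) * 2 = real n * 2 ^ n"
  proof -
    have "real (\<Sum>k\<le>n. k * (n choose k)) * 2 = real n * 2 ^ n"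
      unfolding choose_linear_sum by (cases n) (auto simp: algebra_simps)
    then show ?thesis by simp
  qed
  have r: "(\<Sum>k\<le>n. real (n choose k)) = 2 ^ n"
    using arg_cong[OF choose_row_sum[of n], of real] by simp
  have "(\<Sum>k\<le>n. (2 * real k - real n)^2 * real (n choose k))
     = 4 * (\<Sum>k\<le>n. real k * real k * real (n choose k)) - 4 * real n * (\<Sum>k\<le>n. real k * real (n choose k))
       + real n ^ 2 * (\<Sum>k\<le>n. real (n choose k))"
    by (simp add: power2_eq_square algebra_simps sum.distrib sum_subtractf sum_distrib_left)
  also have "\<dots> = real n * 2 ^ n"
    using q l r by (simp add: algebra_simps power2_eq_square)
  finally show ?thesis .
qed

lemma abs_sum_bound:
  assumes c: "c > 0"
  shows "(\<Sum>k\<le>n. \<bar>2 * real k - real n\<bar> * real (n choose k)) \<le> 2 ^ n * (real n / (2 * c) + c / 2)"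
proof -
  have p: "\<bar>t\<bar> \<le> t^2 / (2 * c) + c / 2" for t :: real
  proof -
    have "0 \<le> (\<bar>t\<bar> - c)^2" by simp
    then have "2 * c * \<bar>t\<bar> \<le> t^2 + c^2" by (simp add: power2_eq_square algebra_simps)
    then show ?thesis using c by (simp add: field_simps power2_eq_square)
  qed
  have "(\<Sum>k\<le>n. \<bar>2 * real k - real n\<bar> * real (n choose k))
      \<le> (\<Sum>k\<le>n. ((2 * real k - real n)^2 / (2 * c) + c / 2) * real (n choose k))"
    by (rule sum_mono) (rule mult_right_mono[OF p], simp)
  also have "\<dots> = (\<Sum>k\<le>n. (2 * real k - real n)^2 * real (n choose k)) / (2 * c)
       + c / 2 * (\<Sum>k\<le>n. real (n choose k))"
    by (simp add: algebra_simps sum.distrib sum_distrib_left sum_divide_distrib)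
  also have "\<dots> = 2 ^ n * (real n / (2 * c) + c / 2)"
    unfolding var_sum using arg_cong[OF choose_row_sum[of n], of real] by (simp add: algebra_simps)
  finally show ?thesis .
qed



locale cs =
  fixes scal :: "complex \<Rightarrow> 'b::ring_1 \<Rightarrow> 'b" and star :: "'b \<Rightarrow> 'b" and nrm :: "'b \<Rightarrow> real"
  assumes cs: "cstar_algebra scal star nrm"
begin

lemma sc1: "scal 1 x = x" using cs unfolding cstar_algebra_def by meson
lemma scadd: "scal (a + b) x = scal a x + scal b x" using cs unfolding cstar_algebra_def by meson
lemma scadd2: "scal a (x + y) = scal a x + scal a y" using cs unfolding cstar_algebra_def by meson
lemma st_inv: "star (star x) = x" using cs unfolding cstar_algebra_def by meson
lemma st_add: "star (x + y) = star x + star y" using cs unfolding cstar_algebra_def by meson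
lemma st_mul: "star (x * y) = star y * star x" using cs unfolding cstar_algebra_def by meson
lemma n0': "\<forall>x. (nrm x = 0) = (x = 0)" using cs unfolding cstar_algebra_def by (elim conjE) assumption
lemma n0: "nrm x = 0 \<longleftrightarrow> x = 0" using n0' by blast
lemma ntri: "nrm (x + y) \<le> nrm x + nrm y" using cs unfolding cstar_algebra_def by meson
lemma nsc: "nrm (scal a x) = cmod a * nrm x" using cs unfolding cstar_algebra_def by meson
lemma nmul: "nrm (x * y) \<le> nrm x * nrm y" using cs unfolding cstar_algebra_def by meson
lemma ncs: "nrm (star x * x) = nrm x ^ 2" using cs unfolding cstar_algebra_def by meson

lemma sc0: "scal 0 x = 0"
  using scadd[of 0 0 x] by simp

lemma scneg: "scal (- a) x = - scal a x"
  using scadd[of a "-a" x] sc0[of x] neg_eq_iff_add_eq_0[of "scal a x" "scal (-a) x"] by simp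

lemma sc_nat: "scal (of_nat n) x = of_nat n * x"
  by (induction n) (simp_all add: sc0 scadd sc1 distrib_right)

lemma sc_int: "scal (of_int t) x = of_int t * x"
proof (cases t rule: int_cases)
  case (nonneg n) then show ?thesis using sc_nat[of n x] by simp
next
  case (neg n)
  then have e1: "of_int t = - (of_nat (Suc n) :: complex)" and e2: "of_int t = - (of_nat (Suc n) :: 'b)" by simp_all
  show ?thesis unfolding e1 e2 scneg sc_nat by (simp add: algebra_simps)
qed

lemma nrm_neg: "nrm (- x) = nrm x"
  using nsc[of "-1" x] scneg[of 1 x] sc1 by simp

lemma nrm_nonneg: "nrm x \<ge> 0"
  using ntri[of x "-x"] nrm_neg[of x] n0[of 0] by simp

lemma nrm_int: "nrm (of_int t * x) = \<bar>of_int t\<bar> * nrm x"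
  using nsc[of "of_int t" x] sc_int[of t x] by (simp add: norm_of_int)

lemma nrm_nat: "nrm (of_nat t * x) = of_nat t * nrm x"
  using nrm_int[of "int t" x] by simp

lemma st0: "star 0 = 0"
  using st_add[of 0 0] by simp

lemma st_neg: "star (- x) = - star x"
  using st_add[of x "-x"] st0 neg_eq_iff_add_eq_0[of "star x" "star (-x)"] by simp

lemma st_diff: "star (x - y) = star x - star y"
  using st_add[of x "-y"] st_neg[of y] by simp

lemma st1: "star 1 = 1"
proof -
  have "star (star 1 * 1) = star 1 * star (star 1)" by (rule st_mul)
  then have "star (star 1) = star 1 * 1" by (simp add: st_inv)
  then show ?thesis by (simp add: st_inv)
qed

lemma proj_nrm:
  assumes "star p = p" "p * p = p"
  shows "nrm p \<le> 1"
proof -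
  have "nrm p = nrm p ^ 2" using ncs[of p] assms by simp
  then have "nrm p = 0 \<or> nrm p = 1" by (simp add: power2_eq_square)
  then show ?thesis by auto
qed

lemma nrm1: "nrm 1 \<le> 1"
  using proj_nrm[of 1] st1 by simp

lemma nrm_pow: "nrm (x ^ k) \<le> nrm x ^ k"
proof (induction k)
  case 0 then show ?case using nrm1 by simp
next
  case (Suc k)
  have "nrm (x ^ Suc k) \<le> nrm x * nrm (x ^ k)" using nmul[of x "x ^ k"] by simp
  also have "\<dots> \<le> nrm x * nrm x ^ k" by (rule mult_left_mono[OF Suc nrm_nonneg])
  finally show ?case by simp
qed

lemma nrm_sum: "nrm (sum f A) \<le> (\<Sum>a\<in>A. nrm (f a))"
proof (induction A rule: infinite_finite_induct)
  case (infinite A) then show ?case using n0[of 0] by simp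
next
  case empty then show ?case using n0[of 0] by simp
next
  case (insert a A)
  then show ?case using ntri[of "f a" "sum f A"] by simp
qed

lemma st_pow: "star x = x \<Longrightarrow> star (x ^ n) = x ^ n"
  by (induction n) (simp_all add: st1 st_mul power_commutes)

lemma nrm_pow2:
  assumes "star x = x"
  shows "nrm (x ^ (2 ^ k)) = nrm x ^ (2 ^ k)"
proof (induction k)
  case 0 then show ?case by simp
next
  case (Suc k)
  have "x ^ (2 ^ Suc k) = star (x ^ (2 ^ k)) * x ^ (2 ^ k)"
    using st_pow[OF assms] by (simp add: power_add[symmetric] mult_2)
  then have "nrm (x ^ (2 ^ Suc k)) = nrm (x ^ (2 ^ k)) ^ 2" using ncs by simp
  then show ?case using Suc by (simp add: power_mult[symmetric] mult.commute)
qed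

end



lemma bern_id:
  fixes a b :: "'a::ring_1"
  assumes ab: "a * b = b * a" and s: "a + b = of_nat s"
  shows "(\<Sum>k\<le>Suc n. of_int (2 * int k - int (Suc n)) * (of_nat (Suc n choose k) * (a ^ k * b ^ (Suc n - k))))
     = of_nat (Suc n) * of_nat (s ^ n) * (a - b)"
proof -
  let ?X = "\<lambda>k. of_nat (Suc n choose k) * a ^ k * b ^ (Suc n - k)"
  have t: "of_int (2 * int k - int (Suc n)) * (of_nat (Suc n choose k) * (a ^ k * b ^ (Suc n - k)))
        = (of_nat (k * (Suc n choose k)) * a ^ k * b ^ (Suc n - k)) + (of_nat (k * (Suc n choose k)) * a ^ k * b ^ (Suc n - k)) - of_nat (Suc n) * ?X k" for k
  proof -
    have e: "2 * int k - int (Suc n) = int k + int k - int (Suc n)" by simp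
    have "of_int (2 * int k - int (Suc n)) = (of_nat k + of_nat k - of_nat (Suc n) :: 'a)"
      unfolding e by (simp only: of_int_diff of_int_add of_int_of_nat_eq)
    then show ?thesis by (simp only: left_diff_distrib distrib_right of_nat_mult mult.assoc)
  qed
  have "(\<Sum>k\<le>Suc n. of_int (2 * int k - int (Suc n)) * (of_nat (Suc n choose k) * (a ^ k * b ^ (Suc n - k))))
     = (\<Sum>k\<le>Suc n. of_nat (k * (Suc n choose k)) * a ^ k * b ^ (Suc n - k)) + (\<Sum>k\<le>Suc n. of_nat (k * (Suc n choose k)) * a ^ k * b ^ (Suc n - k)) - of_nat (Suc n) * (\<Sum>k\<le>Suc n. ?X k)"
    unfolding t by (simp only: sum_subtractf sum.distrib sum_distrib_left)
  also have "\<dots> = (of_nat (Suc n) * a * (a + b) ^ n) + (of_nat (Suc n) * a * (a + b) ^ n) - of_nat (Suc n) * (a + b) ^ Suc n"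
    by (simp only: comm_moment[OF ab] comm_binomial[OF ab])
  also have "\<dots> = (of_nat (Suc n) * a * of_nat (s ^ n)) + (of_nat (Suc n) * a * of_nat (s ^ n)) - of_nat (Suc n) * (of_nat s * of_nat (s ^ n))"
    by (simp only: s of_nat_power power_Suc of_nat_mult)
  also have "\<dots> = of_nat (Suc n) * of_nat (s ^ n) * (a + a - of_nat s)"
  proof -
    have c1: "of_nat (Suc n) * a * of_nat (s ^ n) = of_nat (Suc n) * of_nat (s ^ n) * a"
      by (simp only: mult.assoc mult_of_nat_commute[of "s ^ n" a, symmetric])
    have c2: "of_nat (Suc n) * (of_nat s * of_nat (s ^ n)) = of_nat (Suc n) * of_nat (s ^ n) * (of_nat s :: 'a)"
      by (simp only: mult.assoc mult_of_nat_commute[of s "of_nat (s ^ n) :: 'a"])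
    show ?thesis unfolding c1 c2 by (simp add: algebra_simps)
  qed
  also have "a + a - of_nat s = a - b" unfolding s[symmetric] by (simp add: algebra_simps)
  finally show ?thesis .
qed



context cs begin

lemma term_bound:
  assumes na: "nrm a \<le> r" and nb: "nrm b \<le> r" and k: "k \<le> N"
  shows "nrm (of_int t * (of_nat C * (a ^ k * b ^ (N - k)))) \<le> \<bar>real_of_int t\<bar> * real C * r ^ N"
proof -
  have r0: "0 \<le> r" using na nrm_nonneg order_trans by blast
  have "nrm (a ^ k * b ^ (N - k)) \<le> nrm (a ^ k) * nrm (b ^ (N - k))" by (rule nmul)
  also have "\<dots> \<le> r ^ k * r ^ (N - k)"
    apply (rule mult_mono)
    using nrm_pow[of a k] power_mono[OF na nrm_nonneg, of k] apply linarith
    using nrm_pow[of b "N - k"] power_mono[OF nb nrm_nonneg, of "N - k"] apply linarith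
    using r0 apply simp
    by (rule nrm_nonneg)
  also have "\<dots> = r ^ N" using k by (simp add: power_add[symmetric])
  finally have z: "nrm (a ^ k * b ^ (N - k)) \<le> r ^ N" .
  have "nrm (of_int t * (of_nat C * (a ^ k * b ^ (N - k)))) = \<bar>real_of_int t\<bar> * (real C * nrm (a ^ k * b ^ (N - k)))"
    by (simp add: nrm_int nrm_nat)
  also have "\<dots> \<le> \<bar>real_of_int t\<bar> * (real C * r ^ N)"
    by (intro mult_left_mono z) simp_all
  finally show ?thesis by (simp add: mult.assoc)
qed

lemma bern:
  assumes ab: "a * b = b * a" and na: "nrm a \<le> real m" and nb: "nrm b \<le> real m"
    and s: "a + b = of_nat (2 * m)" and m: "m > 0"
  shows "a = b"
proof (rule ccontr)
  assume "a \<noteq> b"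
  define d where "d = nrm (a - b)"
  have d0: "d > 0" using \<open>a \<noteq> b\<close> n0[of "a - b"] nrm_nonneg[of "a - b"] unfolding d_def by auto
  have key: "real (Suc n) * (2 * real m) ^ n * d \<le> real m ^ Suc n * (2 ^ Suc n * (real (Suc n) / (2 * c) + c / 2))"
    if c: "c > 0" for n c
  proof -
    have "real (Suc n) * (2 * real m) ^ n * d = nrm (of_nat (Suc n) * of_nat ((2 * m) ^ n) * (a - b))"
    proof -
      have "of_nat (Suc n) * of_nat ((2 * m) ^ n) = (of_nat (Suc n * (2 * m) ^ n) :: 'b)" by (simp only: of_nat_mult)
      then have "nrm (of_nat (Suc n) * of_nat ((2 * m) ^ n) * (a - b)) = real (Suc n * (2 * m) ^ n) * d"
        by (simp only: nrm_nat d_def)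
      moreover have "real (Suc n * (2 * m) ^ n) = real (Suc n) * (2 * real m) ^ n" by (simp add: algebra_simps)
      ultimately show ?thesis by simp
    qed
    also have "\<dots> = nrm (\<Sum>k\<le>Suc n. of_int (2 * int k - int (Suc n)) * (of_nat (Suc n choose k) * (a ^ k * b ^ (Suc n - k))))"
      using bern_id[OF ab s, of n] by simp
    also have "\<dots> \<le> (\<Sum>k\<le>Suc n. \<bar>2 * real k - real (Suc n)\<bar> * real (Suc n choose k) * real m ^ Suc n)"
    proof (rule order_trans[OF nrm_sum], rule sum_mono)
      fix k assume "k \<in> {..Suc n}"
      then have "k \<le> Suc n" by simp
      from term_bound[OF na nb this, of "2 * int k - int (Suc n)" "Suc n choose k"]
      show "nrm (of_int (2 * int k - int (Suc n)) * (of_nat (Suc n choose k) * (a ^ k * b ^ (Suc n - k))))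
         \<le> \<bar>2 * real k - real (Suc n)\<bar> * real (Suc n choose k) * real m ^ Suc n" by simp
    qed
    also have "\<dots> = real m ^ Suc n * (\<Sum>k\<le>Suc n. \<bar>2 * real k - real (Suc n)\<bar> * real (Suc n choose k))"
      by (simp add: sum_distrib_left algebra_simps)
    also have "\<dots> \<le> real m ^ Suc n * (2 ^ Suc n * (real (Suc n) / (2 * c) + c / 2))"
      by (rule mult_left_mono[OF abs_sum_bound[OF c]]) simp
    finally show ?thesis .
  qed
  define c where "c = 4 * real m / d"
  have c0: "c > 0" using m d0 by (simp add: c_def)
  obtain n where n: "real (Suc n) > 16 * real m ^ 2 / d ^ 2"
    using reals_Archimedean2[of "16 * real m ^ 2 / d ^ 2"] by (metis less_trans of_nat_Suc lessI of_nat_less_iff) 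
  let ?N = "real (Suc n)"
  have mp: "(2 * real m) ^ n > 0" using m by simp
  have "(2 * real m) ^ n * (?N * d) \<le> (2 * real m) ^ n * (2 * real m * (?N / (2 * c) + c / 2))"
    using key[OF c0, of n] by (simp add: power_Suc algebra_simps power_mult_distrib)
  then have "?N * d \<le> 2 * real m * (?N / (2 * c) + c / 2)"
    using mp by (simp only: mult_le_cancel_left_pos)
  also have "\<dots> = ?N * d / 4 + 4 * real m ^ 2 / d"
    using m d0 by (simp add: c_def field_simps power2_eq_square)
  finally have "?N * d \<le> ?N * d / 4 + 4 * real m ^ 2 / d" .
  then have "?N * d * d \<le> ?N * d * d / 4 + 4 * real m ^ 2"
    using d0 by (simp add: field_simps)
  then have "?N * d ^ 2 \<le> 16 * real m ^ 2"
  proof -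
    assume h: "?N * d * d \<le> ?N * d * d / 4 + 4 * real m ^ 2"
    have y: "0 \<le> real m * real m" by simp
    have h': "?N * (d * d) \<le> ?N * (d * d) / 4 + 4 * (real m * real m)"
      using h by (simp add: power2_eq_square mult.assoc)
    have "?N * (d * d) \<le> 16 * (real m * real m)" using y h' by linarith
    then show ?thesis by (simp add: power2_eq_square)
  qed
  moreover have "?N * d ^ 2 > 16 * real m ^ 2" using n d0 by (simp add: field_simps)
  ultimately show False by simp
qed

end



lemma bound_le1:
  fixes t :: real
  assumes t0: "t \<ge> 0" and b: "\<And>k. t ^ (2 ^ k) \<le> 2"
  shows "t \<le> 1"
proof (rule ccontr)
  assume "\<not> t \<le> 1"
  then have t1: "t > 1" by simp
  obtain n :: nat where n: "real n > 1 / (t - 1)" using reals_Archimedean2 by blast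
  have "real n < 2 ^ n" by (metis less_exp of_nat_less_iff of_nat_numeral of_nat_power)
  then have "1 < real n * (t - 1)" using n t1 by (simp add: field_simps)
  also have "\<dots> \<le> 2 ^ n * (t - 1)" using \<open>real n < 2 ^ n\<close> t1 by simp
  finally have "2 < 1 + real (2 ^ n) * (t - 1)" by simp
  also have "\<dots> \<le> (1 + (t - 1)) ^ (2 ^ n)" by (rule Bernoulli_inequality) (use t1 in simp)
  also have "\<dots> \<le> 2" using b[of n] by simp
  finally show False by simp
qed

context cs begin

lemma proj_sandwich:
  assumes e: "star e = e" "e * e = e" and q: "star q = q" "q * q = q"
  shows "nrm (1 - e * q * e) \<le> 1"
proof -
  define f where "f = 1 - e"
  define w where "w = e * (1 - q) * e"
  define A where "A = 1 - e * q * e"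
  have A: "A = f + w" unfolding A_def f_def w_def by (simp add: algebra_simps e)
  have fe: "f * e = 0" unfolding f_def by (simp add: algebra_simps e)
  have ef: "e * f = 0" unfolding f_def by (simp add: algebra_simps e)
  have ff: "f * f = f" unfolding f_def by (simp add: algebra_simps e)
  have fw: "f * w = 0" unfolding w_def by (simp add: mult.assoc[symmetric] fe)
  have wf: "w * f = 0" unfolding w_def by (simp add: mult.assoc ef)
  have pw: "A ^ Suc n = f + w ^ Suc n" for n
  proof (induction n)
    case 0 then show ?case by (simp add: A)
  next
    case (Suc n)
    have "A ^ Suc (Suc n) = (f + w) * (f + w ^ Suc n)" using Suc by (simp add: A)
    also have "\<dots> = f * f + (f * w) * w ^ n + w * f + w ^ Suc (Suc n)"
      by (simp add: algebra_simps mult.assoc)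
    also have "\<dots> = f + w ^ Suc (Suc n)" by (simp add: ff fw wf)
    finally show ?case .
  qed
  have sA: "star A = A" unfolding A_def by (simp add: st_diff st1 st_mul e q mult.assoc)
  have sf: "star f = f" unfolding f_def by (simp add: st_diff st1 e)
  have nf: "nrm f \<le> 1" by (rule proj_nrm[OF sf ff])
  have sg: "star (1 - q) = 1 - q" by (simp add: st_diff st1 q)
  have gg: "(1 - q) * (1 - q) = 1 - q" by (simp add: algebra_simps q)
  have ne: "nrm e \<le> 1" by (rule proj_nrm[OF e])
  have ng: "nrm (1 - q) \<le> 1" by (rule proj_nrm[OF sg gg])
  have nw: "nrm w \<le> 1"
  proof -
    have "nrm w \<le> nrm (e * (1 - q)) * nrm e" unfolding w_def by (rule nmul)
    also have "\<dots> \<le> (nrm e * nrm (1 - q)) * nrm e"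
      by (rule mult_right_mono[OF nmul nrm_nonneg])
    also have "\<dots> \<le> 1"
      using ne ng nrm_nonneg[of e] nrm_nonneg[of "1 - q"] by (simp add: mult_le_one)
    finally show ?thesis .
  qed
  have "nrm A ^ (2 ^ k) \<le> 2" for k
  proof -
    have k: "(2::nat) ^ k = Suc (2 ^ k - 1)" by simp
    have "nrm A ^ (2 ^ k) = nrm (A ^ (2 ^ k))" by (rule nrm_pow2[OF sA, symmetric])
    also have "\<dots> = nrm (f + w ^ (2 ^ k))" by (subst k, subst pw, subst k[symmetric]) (rule refl)
    also have "\<dots> \<le> nrm f + nrm (w ^ (2 ^ k))" by (rule ntri)
    also have "nrm (w ^ (2 ^ k)) \<le> 1"
      using nrm_pow[of w "2 ^ k"] power_le_one[OF nrm_nonneg nw, of "2 ^ k"] by linarith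
    finally show ?thesis using nf by linarith
  qed
  then show ?thesis unfolding A_def[symmetric] by (rule bound_le1[OF nrm_nonneg])
qed

end



context cs begin

lemma sc_zero: "scal a 0 = 0"
  using scadd2[of a 0 0] by simp

lemma double_zero: "(h::'b) + h = 0 \<Longrightarrow> h = 0"
proof -
  assume "h + h = 0"
  have "scal (1/2) (h + h) = scal (1/2) h + scal (1/2) h" by (rule scadd2)
  also have "\<dots> = scal (1/2 + 1/2) h" by (rule scadd[symmetric])
  also have "\<dots> = h" by (simp add: sc1)
  finally have "scal (1/2) (h + h) = h" .
  with \<open>h + h = 0\<close> show "h = 0" by (simp add: sc_zero)
qed

lemma orth:
  fixes P :: "'x::finite \<Rightarrow> 'b"
  assumes proj: "\<And>c. star (P c) = P c" "\<And>c. P c * P c = P c"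
    and sum1: "(\<Sum>c\<in>UNIV. P c) = 1" and xy: "x \<noteq> y"
  shows "P x * P y = 0"
proof -
  define e where "e = P x"
  define h where "h c = e * P c * e" for c
  define S where "S = UNIV - {x}"
  define D where "D = S - {y}"
  have yS: "y \<in> S" using xy by (simp add: S_def)
  have fS: "finite S" "finite D" by (simp_all add: S_def D_def)
  have sumS: "(\<Sum>c\<in>S. P c) = 1 - e"
    using sum.remove[of UNIV x P] sum1 by (simp add: S_def e_def algebra_simps)
  have "(\<Sum>c\<in>S. h c) = e * (\<Sum>c\<in>S. P c) * e"
    by (simp add: h_def sum_distrib_left sum_distrib_right)
  also have "\<dots> = 0" unfolding sumS using proj[of x] by (simp add: algebra_simps e_def)
  finally have hS: "(\<Sum>c\<in>S. h c) = 0" .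
  have hy: "h y = - (\<Sum>c\<in>D. h c)"
    using sum.remove[OF fS(1) yS, of h] hS by (simp add: D_def eq_neg_iff_add_eq_0)
  define m where "m = card S"
  have m0: "m > 0" using yS fS by (simp add: m_def card_gt_0_iff) blast
  have cD: "card D = m - 1" using yS fS by (simp add: D_def m_def)
  have es: "star e = e" "e * e = e" using proj by (simp_all add: e_def)
  have nh: "nrm (1 - h c) \<le> 1" for c
    unfolding h_def by (rule proj_sandwich[OF es proj])
  define a where "a = of_nat m + h y"
  define b where "b = of_nat m - h y"
  have hm: "h y * of_nat m = of_nat m * h y" by (rule mult_of_nat_commute[symmetric])
  have ab: "a * b = b * a" unfolding a_def b_def
    by (simp add: algebra_simps hm)
  have s: "a + b = of_nat (2 * m)" unfolding a_def b_def mult_2 of_nat_add by (simp add: algebra_simps)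
  have n1: "nrm (of_nat k :: 'b) \<le> real k" for k
    using nrm_nat[of k 1] nrm1 by (simp add: mult_left_le)
  have nb: "nrm b \<le> real m"
  proof -
    have "b = of_nat (m - 1) + (1 - h y)" unfolding b_def using m0 by (simp add: of_nat_diff)
    then have "nrm b \<le> nrm (of_nat (m - 1) :: 'b) + nrm (1 - h y)" using ntri by simp
    also have "\<dots> \<le> real (m - 1) + 1" using n1[of "m - 1"] nh[of y] by linarith
    finally show ?thesis using m0 by simp
  qed
  have na: "nrm a \<le> real m"
  proof -
    have "a = 1 + (\<Sum>c\<in>D. (1 - h c))"
      unfolding a_def hy using cD m0 by (simp add: sum_subtractf of_nat_diff)
    then have "nrm a \<le> nrm 1 + nrm (\<Sum>c\<in>D. (1 - h c))" using ntri by simp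
    also have "\<dots> \<le> 1 + (\<Sum>c\<in>D. nrm (1 - h c))" by (rule add_mono[OF nrm1 nrm_sum])
    also have "\<dots> \<le> 1 + (\<Sum>c\<in>D. 1)" by (rule add_left_mono, rule sum_mono, rule nh)
    also have "\<dots> = real m" using cD m0 by simp
    finally show ?thesis .
  qed
  have "a = b" by (rule bern[OF ab na nb s m0])
  then have "h y + h y = 0" unfolding a_def b_def by (simp add: algebra_simps)
  then have h0: "h y = 0" by (rule double_zero)
  define z where "z = P y * e"
  have "star z * z = e * (P y * P y) * e" unfolding z_def st_mul es proj(1) by (simp only: mult.assoc)
  then have "star z * z = h y" unfolding h_def proj(2) .
  then have "nrm z ^ 2 = 0" using ncs[of z] h0 n0[of 0] by simp
  then have "z = 0" using n0 by simp
  then have "star z = 0" by (simp add: st0)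
  then show ?thesis unfolding z_def by (simp add: st_mul es proj e_def)
qed

end



lemma part1:
  fixes u :: "'x::{ab_group_add, finite} \<Rightarrow> 'x \<Rightarrow> 'b::ring_1"
  assumes c: "cstar_algebra scal star nrm" and mg: "magic star u" and dr: "diff_rel u"
  shows "u i j * u k l = u k l * u i j"
proof -
  interpret cs scal star nrm by (rule cs.intro[OF c])
  define v where "v a = u a 0" for a
  have uv: "u i j = v (i - j)" for i j
    using dr unfolding diff_rel_def v_def by (metis diff_zero)
  have pr: "star (v a) = v a" "v a * v a = v a" for a
    using mg unfolding magic_def v_def by auto
  have s1: "(\<Sum>a\<in>UNIV. v a) = 1" using mg unfolding magic_def v_def by auto
  show ?thesis
  proof (cases "i - j = k - l")
    case True then show ?thesis by (simp add: uv)
  next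
    case False
    have "v (i - j) * v (k - l) = 0" by (rule orth[OF pr s1 False])
    moreover have "v (k - l) * v (i - j) = 0" using False by (intro orth[OF pr s1]) auto
    ultimately show ?thesis by (simp add: uv)
  qed
qed

lemma transl_diff_rel: "diff_rel (perm_mat (\<lambda>j. j + (x::'x::ab_group_add)))"
  unfolding diff_rel_def perm_mat_def
  by (metis add.commute diff_add_cancel add_diff_cancel_left')

lemma transl_magic: "magic cnj (perm_mat (\<lambda>j. j + (x::'x::{ab_group_add,finite})))"
proof -
  have r: "(\<Sum>j\<in>UNIV. perm_mat (\<lambda>j. j + x) i j) = 1" for i
  proof -
    have "(\<Sum>j\<in>UNIV. perm_mat (\<lambda>j. j + x) i j) = (\<Sum>j\<in>UNIV. if j = i - x then 1 else 0)"
      unfolding perm_mat_def by (rule sum.cong) (auto simp: algebra_simps)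
    then show ?thesis by simp
  qed
  have c: "(\<Sum>i\<in>UNIV. perm_mat (\<lambda>j. j + x) i j) = 1" for j
    unfolding perm_mat_def by simp
  show ?thesis unfolding magic_def using r c by (auto simp: perm_mat_def)
qed

lemma part2:
  "{u :: 'x::{ab_group_add, finite} \<Rightarrow> 'x \<Rightarrow> complex. magic cnj u \<and> diff_rel u}
       = {perm_mat (\<lambda>j. j + x) | x. True}"
proof (intro equalityI subsetI)
  fix u assume "u \<in> {u :: 'x \<Rightarrow> 'x \<Rightarrow> complex. magic cnj u \<and> diff_rel u}"
  then have mg: "magic cnj u" and dr: "diff_rel u" by auto
  have uv: "u i j = u (i - j) 0" for i j
    using dr unfolding diff_rel_def by (metis diff_zero)
  have b: "u i j = 0 \<or> u i j = 1" for i j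
    using mg unfolding magic_def by (metis mult_cancel_right1 mult_zero_left right_minus_eq mult.commute)
  have s: "(\<Sum>i\<in>UNIV. u i 0) = 1" using mg unfolding magic_def by auto
  obtain i0 where i0: "u i0 0 = 1"
  proof (rule ccontr)
    assume "\<not> thesis"
    then have "u i 0 = 0" for i using that b by blast
    then show False using s by simp
  qed
  have oth: "u i 0 = 0" if "i \<noteq> i0" for i
  proof (rule ccontr)
    assume "u i 0 \<noteq> 0"
    then have ui: "u i 0 = 1" using b by blast
    have "(\<Sum>c\<in>UNIV. u c 0) = u i0 0 + (\<Sum>c\<in>UNIV - {i0}. u c 0)"
      by (simp add: sum.remove)
    also have "(\<Sum>c\<in>UNIV - {i0}. u c 0) = u i 0 + (\<Sum>c\<in>UNIV - {i0} - {i}. u c 0)"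
      using that by (intro sum.remove) auto
    finally have "(\<Sum>c\<in>UNIV - {i0} - {i}. u c 0) = -1" using s i0 ui by (simp add: add_eq_0_iff)
    then have "Re (\<Sum>c\<in>UNIV - {i0} - {i}. u c 0) = -1" by simp
    moreover have "Re (\<Sum>c\<in>UNIV - {i0} - {i}. u c 0) \<ge> 0"
      unfolding Re_sum
    proof (rule sum_nonneg)
      fix c show "0 \<le> Re (u c 0)" using b[of c 0] by auto
    qed
    ultimately show False by simp
  qed
  have "u = perm_mat (\<lambda>j. j + i0)"
  proof (intro ext)
    fix i j
    show "u i j = perm_mat (\<lambda>j. j + i0) i j"
    proof (cases "i - j = i0")
      case True then show ?thesis using i0 uv[of i j] by (auto simp: perm_mat_def)
    next
      case False
      then have "i \<noteq> j + i0" by (auto simp: algebra_simps)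
      then show ?thesis using oth[OF False] uv[of i j] by (simp add: perm_mat_def)
    qed
  qed
  then show "u \<in> {perm_mat (\<lambda>j. j + x) | x. True}" by blast
next
  fix u assume "u \<in> {perm_mat (\<lambda>j. j + x) | x :: 'x. True}"
  then obtain x where "u = perm_mat (\<lambda>j. j + x)" by blast
  then show "u \<in> {u. magic cnj u \<and> diff_rel u}" using transl_magic transl_diff_rel by auto
qed

lemma part3:
  "{\<sigma> :: 'x::{ab_group_add, finite} \<Rightarrow> 'x. \<sigma> permutes UNIV \<and> diff_rel (perm_mat \<sigma>)}
       = {(\<lambda>j. j + x) | x. True}"
proof (intro equalityI subsetI)
  fix \<sigma> assume "\<sigma> \<in> {\<sigma> :: 'x \<Rightarrow> 'x. \<sigma> permutes UNIV \<and> diff_rel (perm_mat \<sigma>)}"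
  then have dr: "diff_rel (perm_mat \<sigma>)" by auto
  then have dr': "\<forall>i j k l. i - j = k - l \<longrightarrow> perm_mat \<sigma> i j = perm_mat \<sigma> k l"
    unfolding diff_rel_def .
  have "\<sigma> j = j + \<sigma> 0" for j
  proof -
    have "perm_mat \<sigma> (\<sigma> j) j = perm_mat \<sigma> (\<sigma> j - j) 0"
      using dr'[rule_format, of "\<sigma> j" j "\<sigma> j - j" 0] by simp
    then have "\<sigma> j - j = \<sigma> 0" unfolding perm_mat_def by (simp split: if_splits)
    then have "\<sigma> j = \<sigma> 0 + j" by (simp only: diff_eq_eq)
    then show ?thesis by (simp only: add.commute)
  qed
  then have "\<sigma> = (\<lambda>j. j + \<sigma> 0)" by (rule ext)
  then show "\<sigma> \<in> {(\<lambda>j. j + x) | x. True}" by blast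
next
  fix \<sigma> assume "\<sigma> \<in> {(\<lambda>j. j + x) | x :: 'x. True}"
  then obtain x where s: "\<sigma> = (\<lambda>j. j + x)" by blast
  have ex: "\<exists>!z. z + x = y" for y
  proof (rule ex1I[of _ "y - x"])
    show "y - x + x = y" by simp
    fix z assume "z + x = y" then show "z = y - x" by (simp only: eq_diff_eq)
  qed
  have "\<sigma> permutes UNIV" unfolding s permutes_def using ex by simp
  then show "\<sigma> \<in> {\<sigma>. \<sigma> permutes UNIV \<and> diff_rel (perm_mat \<sigma>)}" using s transl_diff_rel by auto
qed

theorem lemma3p5:
  fixes X :: "'x::{ab_group_add, finite} itself"
  shows
    "(\<forall>(scal :: complex \<Rightarrow> 'b::ring_1 \<Rightarrow> 'b) star nrm (u :: 'x \<Rightarrow> 'x \<Rightarrow> 'b).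
        cstar_algebra scal star nrm \<and> magic star u \<and> diff_rel u \<longrightarrow>
        (\<forall>i j k l. u i j * u k l = u k l * u i j))
   \<and> {u :: 'x \<Rightarrow> 'x \<Rightarrow> complex. magic cnj u \<and> diff_rel u}
       = {perm_mat (\<lambda>j. j + x) | x. True}
   \<and> {\<sigma> :: 'x \<Rightarrow> 'x. \<sigma> permutes UNIV \<and> diff_rel (perm_mat \<sigma>)}
       = {(\<lambda>j. j + x) | x. True}"
  using part1 part2 part3 by blast


end
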